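(* Let $\mathcal{S}=(T,T^+)$ be a concrete regularity structure, let $M=(\Pi,g)$ be a model over $\mathcal{S}$, let $\gamma\in\mathbb{R}$, and let $\mathbf{v}\in\mathcal{D}^\gamma(\mathcal{S},g)$. Set $\Lambda_x=\Pi_x(\mathbf{v}(x))$ for $x\in\mathbb{R}^d$. Then the family $(\Lambda_x)_{x\in\mathbb{R}^d}$ satisfies the $\gamma$-coherence estimate: there exists $C<\infty$ such that for all $x,y\in\mathbb{R}^d$ and all $0<t\le1$, $$\big|\langle\Lambda_y-\Lambda_x,p_t(x,\cdot)\rangle\big|\le C\sum_{\tau\in\mathbf{B},\,|\tau|<\gamma}t^{|\tau|/2}\big(|y-x|+t^{1/2}\big)^{\gamma-|\tau|}.$$
   Context: $p_t(x,y)$ is the heat kernel on $\mathbb{R}^d$ and $\langle\cdot,\cdot\rangle$ the distribution/test-function pairing. A concrete regularity structure $\mathcal{S}=(T,T^+)$ consists of graded vector spaces $T=\bigoplus_{a\in A}T_a$ and $T^+=\bigoplus_{\alpha\in A^+}T^+_\alpha$ with each $T_a$, $T^+_\alpha$ finite dimensional, where $A\subset\mathbb{R}$ is locally finite and bounded below and $A^+\subset[0,\infty)$ contains $0$; $T^+$ is a Hopf algebra with coproduct $\Delta^+:T^+\to T^+\otimes T^+$, unit $\mathbf{1}_+$ and counit $\mathbf{1}'_+$; and there is a linear map $\Delta:T\to T\otimes T^+$ with $(\Delta\otimes\mathrm{Id})\Delta=(\mathrm{Id}\otimes\Delta^+)\Delta$, $(\mathrm{Id}\otimes\mathbf{1}'_+)\Delta=\mathrm{Id}$,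 and $\Delta T_a\subset\bigoplus_{\alpha\in A^+}T_{a-\alpha}\otimes T^+_\alpha$ for all $a\in A$. Fix a basis $\mathbf{B}_a$ of each $T_a$ and let $\mathbf{B}=\bigcup_a\mathbf{B}_a$; for $\tau\in\mathbf{B}_a$ write $|\tau|=a$; for $h\in T$ write $h_\tau$ for its coefficient on $\tau\in\mathbf{B}$; let $\mathbf{B}^+$ be a similarly graded basis of $T^+$. $G^+$ is the set of real-valued linear multiplicative maps on $T^+$. A model $M=(\Pi,g)$ is a family of linear maps $\Pi_x:T\to\mathcal{S}'(\mathbb{R}^d)$ ($x\in\mathbb{R}^d$) and characters $g_{yx}\in G^+$ ($x,y\in\mathbb{R}^d$) such that $(g_{zy}\otimes g_{yx})\Delta^+=g_{zx}$ and, with $\Gamma_{yx}=(\mathrm{Id}\otimes g_{yx})\Delta:T\to T$, one has $\Pi_x(\tau)=\Pi_y(\Gamma_{yx}\tau)$ for all $x,y,z$ and $\tau\in T$; and for each $c\in\mathbb{R}$, $\sup_{\mu\in\mathbf{B}^+,|\mu|\le c}\sup_{x,y}|g_{yx}(\mu)|/|y-x|^{|\mu|}<\infty$ and $\sup_{\tau\in\mathbf{B},|\tau|\le c}\sup_{0<t\le1}\sup_x t^{-|\tau|/2}|\langle\Pi_x(\tau),p_t(x,\cdot)\rangle|<\infty$. With $T_{<\gamma}=\bigoplus_{a<\gamma}T_a$, $\mathcal{D}^\gamma(\mathcal{S},g)$ is the space of functions $\mathbf{v}:\mathbb{R}^d\to T_{<\gamma}$ with $\max_{\tau\in\mathbf{B},|\tau|<\gamma}\sup_{x\neq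 y}\big(|\mathbf{v}(x)_\tau|+|(\mathbf{v}(y)-\Gamma_{yx}\mathbf{v}(x))_\tau|/|y-x|^{\gamma-|\tau|}\big)<\infty$. A family $(\Lambda_x)$ of distributions satisfies the $\gamma$-coherence estimate if there are finitely many exponents $\beta_i\le\gamma$ and $C$ with $|\langle\Lambda_y-\Lambda_x,p_t(x,\cdot)\rangle|\le C\sum_it^{\beta_i/2}(|y-x|+t^{1/2})^{\gamma-\beta_i}$ for all $x,y$ and $0<t\le1$. *)

theory Defs
  imports "HOL-Analysis.Analysis"
begin

text \<open>Elements of T are finitely supported coefficient functions on the basis type 'b
  (graded by deg), elements of T^+ are finitely supported coefficient functions on
  the basis type 'c (graded by degp).  Linear maps are given on basis elements by
  their coefficients (structure constants).\<close>

definition fsum :: "('a \<Rightarrow> real) \<Rightarrow> real" where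
  "fsum f = sum f {x. f x \<noteq> 0}"

definition kd :: "'a \<Rightarrow> 'a \<Rightarrow> real" where
  "kd a b = (if a = b then 1 else 0)"

text \<open>r^a with the convention 0^0 = 1 (for r \<ge> 0).\<close>
definition pw :: "real \<Rightarrow> real \<Rightarrow> real" where
  "pw r a = (if a = 0 then 1 else r powr a)"

definition graded_T :: "real set \<Rightarrow> ('b \<Rightarrow> real) \<Rightarrow> bool" where
  "graded_T A deg \<longleftrightarrow> (\<forall>b. deg b \<in> A) \<and> (\<forall>a. finite {b. deg b = a})
     \<and> (\<forall>r. finite (A \<inter> {-r..r})) \<and> bdd_below A"

definition graded_Tp :: "real set \<Rightarrow> ('c \<Rightarrow> real) \<Rightarrow> bool" where
  "graded_Tp Ap degp \<longleftrightarrow> (\<forall>b. degp b \<in> Ap) \<and> (\<forall>a. finite {b. degp b = a})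
     \<and> Ap \<subseteq> {0..} \<and> 0 \<in> Ap"

text \<open>Hopf algebra on the vector space with basis 'c:
  mp a b k = coefficient of k in a*b; unit = 1_+; cop a k l = coefficient of k (x) l in
  Delta^+ a; cou = counit 1'_+; ant a k = coefficient of k in S a (antipode).\<close>
definition hopf_algebra ::
  "('c \<Rightarrow> 'c \<Rightarrow> 'c \<Rightarrow> real) \<Rightarrow> ('c \<Rightarrow> real) \<Rightarrow> ('c \<Rightarrow> 'c \<Rightarrow> 'c \<Rightarrow> real)
    \<Rightarrow> ('c \<Rightarrow> real) \<Rightarrow> ('c \<Rightarrow> 'c \<Rightarrow> real) \<Rightarrow> bool" where
  "hopf_algebra mp unit cop cou ant \<longleftrightarrow>
    (\<forall>a b. finite {k. mp a b k \<noteq> 0}) \<and> finite {k. unit k \<noteq> 0}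
    \<and> (\<forall>a. finite {(k, l). cop a k l \<noteq> 0}) \<and> (\<forall>a. finite {k. ant a k \<noteq> 0})
    \<comment> \<open>associativity and unit\<close>
    \<and> (\<forall>a b c k. fsum (\<lambda>j. mp a b j * mp j c k) = fsum (\<lambda>j. mp b c j * mp a j k))
    \<and> (\<forall>a k. fsum (\<lambda>j. unit j * mp j a k) = kd a k)
    \<and> (\<forall>a k. fsum (\<lambda>j. unit j * mp a j k) = kd a k)
    \<comment> \<open>coassociativity and counit\<close>
    \<and> (\<forall>a k l n. fsum (\<lambda>j. cop a j n * cop j k l) = fsum (\<lambda>j. cop a k j * cop j l n))
    \<and> (\<forall>a l. fsum (\<lambda>k. cou k * cop a k l) = kd a l)
    \<and> (\<forall>a k. fsum (\<lambda>l. cop a k l * cou l) = kd a k)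
    \<comment> \<open>bialgebra compatibility\<close>
    \<and> (\<forall>a b k l. fsum (\<lambda>j. mp a b j * cop j k l)
          = fsum (\<lambda>(a1, a2, b1, b2). cop a a1 a2 * cop b b1 b2 * mp a1 b1 k * mp a2 b2 l))
    \<and> (\<forall>k l. fsum (\<lambda>j. unit j * cop j k l) = unit k * unit l)
    \<and> (\<forall>a b. fsum (\<lambda>j. mp a b j * cou j) = cou a * cou b)
    \<and> fsum (\<lambda>j. unit j * cou j) = 1
    \<comment> \<open>antipode\<close>
    \<and> (\<forall>a k. fsum (\<lambda>(j, l, j'). cop a j l * ant j j' * mp j' l k) = cou a * unit k)
    \<and> (\<forall>a k. fsum (\<lambda>(j, l, l'). cop a j l * ant l l' * mp j l' k) = cou a * unit k)"

text \<open>Coaction Delta : T -> T (x) T^+, D tau sigma mu = coefficient of sigma (x) mu in Delta tau.\<close>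
definition comodule ::
  "('b \<Rightarrow> real) \<Rightarrow> ('c \<Rightarrow> real) \<Rightarrow> ('c \<Rightarrow> 'c \<Rightarrow> 'c \<Rightarrow> real) \<Rightarrow> ('c \<Rightarrow> real)
    \<Rightarrow> ('b \<Rightarrow> 'b \<Rightarrow> 'c \<Rightarrow> real) \<Rightarrow> bool" where
  "comodule deg degp cop cou D \<longleftrightarrow>
    (\<forall>\<tau>. finite {(\<sigma>, \<mu>). D \<tau> \<sigma> \<mu> \<noteq> 0})
    \<and> (\<forall>\<tau> \<sigma> \<mu> \<nu>. fsum (\<lambda>\<rho>. D \<tau> \<rho> \<nu> * D \<rho> \<sigma> \<mu>) = fsum (\<lambda>\<rho>. D \<tau> \<sigma> \<rho> * cop \<rho> \<mu> \<nu>))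
    \<and> (\<forall>\<tau> \<sigma>. fsum (\<lambda>\<mu>. D \<tau> \<sigma> \<mu> * cou \<mu>) = kd \<tau> \<sigma>)
    \<and> (\<forall>\<tau> \<sigma> \<mu>. D \<tau> \<sigma> \<mu> \<noteq> 0 \<longrightarrow> deg \<sigma> = deg \<tau> - degp \<mu>)"

definition concrete_RS ::
  "real set \<Rightarrow> ('b \<Rightarrow> real) \<Rightarrow> real set \<Rightarrow> ('c \<Rightarrow> real)
   \<Rightarrow> ('c \<Rightarrow> 'c \<Rightarrow> 'c \<Rightarrow> real) \<Rightarrow> ('c \<Rightarrow> real) \<Rightarrow> ('c \<Rightarrow> 'c \<Rightarrow> 'c \<Rightarrow> real)
   \<Rightarrow> ('c \<Rightarrow> real) \<Rightarrow> ('c \<Rightarrow> 'c \<Rightarrow> real) \<Rightarrow> ('b \<Rightarrow> 'b \<Rightarrow> 'c \<Rightarrow> real) \<Rightarrow> bool" where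
  "concrete_RS A deg Ap degp mp unit cop cou ant D \<longleftrightarrow>
     graded_T A deg \<and> graded_Tp Ap degp \<and> hopf_algebra mp unit cop cou ant
     \<and> comodule deg degp cop cou D"

text \<open>Elements of G^+: linear multiplicative maps T^+ -> R (given by values on the basis).\<close>
definition character :: "('c \<Rightarrow> 'c \<Rightarrow> 'c \<Rightarrow> real) \<Rightarrow> ('c \<Rightarrow> real) \<Rightarrow> bool" where
  "character mp g \<longleftrightarrow> (\<forall>a b. fsum (\<lambda>k. mp a b k * g k) = g a * g b)"

text \<open>Gamma_g h = (Id (x) g) Delta h, for h in T.\<close>
definition Gam :: "('b \<Rightarrow> 'b \<Rightarrow> 'c \<Rightarrow> real) \<Rightarrow> ('c \<Rightarrow> real) \<Rightarrow> ('b \<Rightarrow> real) \<Rightarrow> ('b \<Rightarrow> real)" where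
  "Gam D g h = (\<lambda>\<sigma>. fsum (\<lambda>\<tau>. h \<tau> * fsum (\<lambda>\<mu>. D \<tau> \<sigma> \<mu> * g \<mu>)))"

text \<open>Distributions, modelled as linear functionals acting on test functions.\<close>
definition distribution :: "(('a \<Rightarrow> real) \<Rightarrow> real) \<Rightarrow> bool" where
  "distribution L \<longleftrightarrow> (\<forall>\<phi> \<psi> a b. L (\<lambda>z. a * \<phi> z + b * \<psi> z) = a * L \<phi> + b * L \<psi>)"

definition piT :: "('b \<Rightarrow> ('a \<Rightarrow> real) \<Rightarrow> real) \<Rightarrow> ('b \<Rightarrow> real) \<Rightarrow> ('a \<Rightarrow> real) \<Rightarrow> real" where
  "piT P h = (\<lambda>\<phi>. fsum (\<lambda>\<tau>. h \<tau> * P \<tau> \<phi>))"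

definition heat :: "real \<Rightarrow> 'a::euclidean_space \<Rightarrow> 'a \<Rightarrow> real" where
  "heat t x y = (4 * pi * t) powr (- real DIM('a) / 2) * exp (- (norm (x - y))\<^sup>2 / (4 * t))"

definition is_model ::
  "('c \<Rightarrow> 'c \<Rightarrow> 'c \<Rightarrow> real) \<Rightarrow> ('c \<Rightarrow> 'c \<Rightarrow> 'c \<Rightarrow> real) \<Rightarrow> ('b \<Rightarrow> real) \<Rightarrow> ('c \<Rightarrow> real)
   \<Rightarrow> ('b \<Rightarrow> 'b \<Rightarrow> 'c \<Rightarrow> real)
   \<Rightarrow> ('a::euclidean_space \<Rightarrow> 'b \<Rightarrow> ('a \<Rightarrow> real) \<Rightarrow> real) \<Rightarrow> ('a \<Rightarrow> 'a \<Rightarrow> 'c \<Rightarrow> real) \<Rightarrow> bool" where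
  "is_model mp cop deg degp D Pix g \<longleftrightarrow>
     (\<forall>x \<tau>. distribution (Pix x \<tau>))
     \<and> (\<forall>x y. character mp (g y x))
     \<and> (\<forall>x y z k. fsum (\<lambda>(a, b). cop k a b * g z y a * g y x b) = g z x k)
     \<and> (\<forall>x y \<tau>. Pix x \<tau> = piT (Pix y) (Gam D (g y x) (kd \<tau>)))
     \<and> (\<forall>c. \<exists>K. \<forall>\<mu> x y. degp \<mu> \<le> c \<longrightarrow> \<bar>g y x \<mu>\<bar> \<le> K * pw (norm (y - x)) (degp \<mu>))
     \<and> (\<forall>c. \<exists>K. \<forall>\<tau> t x. deg \<tau> \<le> c \<longrightarrow> 0 < t \<longrightarrow> t \<le> 1 \<longrightarrow>
            \<bar>Pix x \<tau> (heat t x)\<bar> \<le> K * t powr (deg \<tau> / 2))"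

definition Dgamma ::
  "('b \<Rightarrow> real) \<Rightarrow> ('b \<Rightarrow> 'b \<Rightarrow> 'c \<Rightarrow> real) \<Rightarrow> ('a::real_normed_vector \<Rightarrow> 'a \<Rightarrow> 'c \<Rightarrow> real)
     \<Rightarrow> real \<Rightarrow> ('a \<Rightarrow> 'b \<Rightarrow> real) \<Rightarrow> bool" where
  "Dgamma deg D g \<gamma> v \<longleftrightarrow>
     (\<forall>x \<tau>. \<gamma> \<le> deg \<tau> \<longrightarrow> v x \<tau> = 0)
     \<and> (\<exists>K. \<forall>\<tau> x y. deg \<tau> < \<gamma> \<longrightarrow> x \<noteq> y \<longrightarrow>
          \<bar>v x \<tau>\<bar> + \<bar>v y \<tau> - Gam D (g y x) (v x) \<tau>\<bar> / norm (y - x) powr (\<gamma> - deg \<tau>) \<le> K)"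

end

theory Submission
  imports Defs
begin

lemma fsum_eq_sum: "finite F \<Longrightarrow> {z. f z \<noteq> 0} \<subseteq> F \<Longrightarrow> fsum f = sum f F"
  unfolding fsum_def by (rule sum.mono_neutral_left) auto

lemma fsum_single: "(\<And>z. z \<noteq> a \<Longrightarrow> f z = 0) \<Longrightarrow> fsum f = f a"
  using fsum_eq_sum[of "{a}" f] by auto

lemma fsum_nz: "fsum f \<noteq> 0 \<Longrightarrow> \<exists>z. f z \<noteq> 0"
  unfolding fsum_def by (metis (mono_tags, lifting) empty_Collect_eq sum.empty)

lemma prod3_mono: "0 \<le> (a::real) \<Longrightarrow> a \<le> A \<Longrightarrow> 0 \<le> b \<Longrightarrow> b \<le> B \<Longrightarrow> 0 \<le> c \<Longrightarrow> c \<le> C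
  \<Longrightarrow> a * b * c \<le> A * B * C"
  by (meson mult_mono mult_nonneg_nonneg order_trans)

theorem proposition7:
  fixes A Ap :: "real set"
    and deg :: "'b \<Rightarrow> real" and degp :: "'c \<Rightarrow> real"
    and mp cop :: "'c \<Rightarrow> 'c \<Rightarrow> 'c \<Rightarrow> real" and unit cou :: "'c \<Rightarrow> real"
    and ant :: "'c \<Rightarrow> 'c \<Rightarrow> real" and D :: "'b \<Rightarrow> 'b \<Rightarrow> 'c \<Rightarrow> real"
    and Pix :: "'a::euclidean_space \<Rightarrow> 'b \<Rightarrow> ('a \<Rightarrow> real) \<Rightarrow> real"
    and g :: "'a \<Rightarrow> 'a \<Rightarrow> 'c \<Rightarrow> real"
    and \<gamma> :: real and v :: "'a \<Rightarrow> 'b \<Rightarrow> real"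
  assumes "concrete_RS A deg Ap degp mp unit cop cou ant D"
    and "is_model mp cop deg degp D Pix g"
    and "Dgamma deg D g \<gamma> v"
  shows "\<exists>C. \<forall>x y t. 0 < t \<longrightarrow> t \<le> 1 \<longrightarrow>
           \<bar>piT (Pix y) (v y) (heat t x) - piT (Pix x) (v x) (heat t x)\<bar>
             \<le> C * (\<Sum>\<tau>\<in>{\<tau>. deg \<tau> < \<gamma>}. t powr (deg \<tau> / 2) * (norm (y - x) + sqrt t) powr (\<gamma> - deg \<tau>))"
proof -
  from assms(1) have gT: "graded_T A deg" and gTp: "graded_Tp Ap degp"
    and cm: "comodule deg degp cop cou D" unfolding concrete_RS_def by auto
  define S where "S = {\<tau>. deg \<tau> < \<gamma>}"
  have finS: "finite S"
  proof -
    obtain L where L: "\<And>a. a \<in> A \<Longrightarrow> L \<le> a" using gT unfolding graded_T_def bdd_below_def by blast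
    define r where "r = \<bar>L\<bar> + \<bar>\<gamma>\<bar>"
    have f1: "finite (A \<inter> {-r..r})" using gT unfolding graded_T_def by auto
    have "S \<subseteq> (\<Union>a\<in>A \<inter> {-r..r}. {b. deg b = a})"
    proof
      fix b assume "b \<in> S"
      then have "deg b < \<gamma>" by (simp add: S_def)
      moreover have "deg b \<in> A" using gT unfolding graded_T_def by auto
      moreover have "L \<le> deg b" using L calculation by auto
      ultimately show "b \<in> (\<Union>a\<in>A \<inter> {-r..r}. {b. deg b = a})" unfolding r_def by auto
    qed
    moreover have "finite (\<Union>a\<in>A \<inter> {-r..r}. {b. deg b = a})"
      using f1 gT unfolding graded_T_def by auto
    ultimately show ?thesis by (rule finite_subset)
  qed
  have degp_nn: "\<And>\<mu>. 0 \<le> degp \<mu>" using gTp unfolding graded_Tp_def by auto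
  have Dfin: "\<And>\<tau>. finite {(\<sigma>,\<mu>). D \<tau> \<sigma> \<mu> \<noteq> 0}" using cm unfolding comodule_def by auto
  have Ddeg: "\<And>\<tau> \<sigma> \<mu>. D \<tau> \<sigma> \<mu> \<noteq> 0 \<Longrightarrow> deg \<sigma> = deg \<tau> - degp \<mu>"
    using cm unfolding comodule_def by auto
  define M where "M = (\<Union>\<sigma>\<in>S. snd ` {(a,b). D \<sigma> a b \<noteq> 0})"
  have finM: "finite M" unfolding M_def using finS Dfin by auto
  have inM: "\<And>\<sigma> \<rho> \<mu>. \<sigma> \<in> S \<Longrightarrow> D \<sigma> \<rho> \<mu> \<noteq> 0 \<Longrightarrow> \<mu> \<in> M"
  proof -
    fix \<sigma> \<rho> \<mu> assume "\<sigma> \<in> S" "D \<sigma> \<rho> \<mu> \<noteq> 0"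
    then have "\<mu> \<in> snd ` {(a,b). D \<sigma> a b \<noteq> 0}" by (intro rev_image_eqI[of "(\<rho>,\<mu>)"]) auto
    then show "\<mu> \<in> M" unfolding M_def using \<open>\<sigma> \<in> S\<close> by auto
  qed
  define c where "c h \<tau> \<sigma> = fsum (\<lambda>\<mu>. D \<tau> \<sigma> \<mu> * h \<mu>)" for h \<tau> \<sigma>
  have c_sum: "\<And>h \<tau> \<sigma>. \<tau> \<in> S \<Longrightarrow> c h \<tau> \<sigma> = (\<Sum>\<mu>\<in>M. D \<tau> \<sigma> \<mu> * h \<mu>)"
    unfolding c_def by (rule fsum_eq_sum) (use finM inM in auto)
  have c_supp: "\<And>h \<tau> \<sigma>. c h \<tau> \<sigma> \<noteq> 0 \<Longrightarrow> deg \<sigma> \<le> deg \<tau>"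
  proof -
    fix h \<tau> \<sigma> assume "c h \<tau> \<sigma> \<noteq> 0"
    then obtain \<mu> where "D \<tau> \<sigma> \<mu> * h \<mu> \<noteq> 0" unfolding c_def using fsum_nz by blast
    then have "D \<tau> \<sigma> \<mu> \<noteq> 0" by auto
    then show "deg \<sigma> \<le> deg \<tau>" using Ddeg degp_nn by force
  qed
  have Gam_kd: "\<And>h \<tau> \<sigma>. Gam D h (kd \<tau>) \<sigma> = c h \<tau> \<sigma>"
  proof -
    fix h \<tau> \<sigma>
    have "Gam D h (kd \<tau>) \<sigma> = kd \<tau> \<tau> * fsum (\<lambda>\<mu>. D \<tau> \<sigma> \<mu> * h \<mu>)"
      unfolding Gam_def by (rule fsum_single) (simp add: kd_def)
    then show "Gam D h (kd \<tau>) \<sigma> = c h \<tau> \<sigma>" by (simp add: kd_def c_def)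
  qed
  from assms(2) have Pmod: "\<And>x y \<tau>. Pix x \<tau> = piT (Pix y) (Gam D (g y x) (kd \<tau>))"
    unfolding is_model_def by auto
  have Pexp: "\<And>x y \<tau> \<phi>. \<tau> \<in> S \<Longrightarrow> Pix x \<tau> \<phi> = (\<Sum>\<sigma>\<in>S. c (g y x) \<tau> \<sigma> * Pix y \<sigma> \<phi>)"
  proof -
    fix x y \<tau> \<phi> assume tS: "\<tau> \<in> S"
    have "Pix x \<tau> \<phi> = fsum (\<lambda>\<sigma>. c (g y x) \<tau> \<sigma> * Pix y \<sigma> \<phi>)"
      by (subst Pmod[of x \<tau> y]) (simp add: piT_def Gam_kd)
    also have "\<dots> = (\<Sum>\<sigma>\<in>S. c (g y x) \<tau> \<sigma> * Pix y \<sigma> \<phi>)"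
    proof (rule fsum_eq_sum[OF finS])
      show "{z. c (g y x) \<tau> z * Pix y z \<phi> \<noteq> 0} \<subseteq> S"
        using c_supp tS by (force simp: S_def)
    qed
    finally show "Pix x \<tau> \<phi> = (\<Sum>\<sigma>\<in>S. c (g y x) \<tau> \<sigma> * Pix y \<sigma> \<phi>)" .
  qed
  have vS: "\<And>x \<tau>. \<tau> \<notin> S \<Longrightarrow> v x \<tau> = 0" using assms(3) unfolding Dgamma_def S_def by auto
  have Lam: "\<And>x \<phi>. piT (Pix x) (v x) \<phi> = (\<Sum>\<tau>\<in>S. v x \<tau> * Pix x \<tau> \<phi>)"
    unfolding piT_def by (rule fsum_eq_sum[OF finS]) (use vS in auto)
  have GamV: "\<And>x y \<sigma>. Gam D (g y x) (v x) \<sigma> = (\<Sum>\<tau>\<in>S. v x \<tau> * c (g y x) \<tau> \<sigma>)"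
    unfolding Gam_def c_def[symmetric] by (rule fsum_eq_sum[OF finS]) (use vS in auto)
  obtain K1 where K1: "\<And>\<tau> x y. deg \<tau> < \<gamma> \<Longrightarrow> x \<noteq> y \<Longrightarrow>
      \<bar>v x \<tau>\<bar> + \<bar>v y \<tau> - Gam D (g y x) (v x) \<tau>\<bar> / norm (y - x) powr (\<gamma> - deg \<tau>) \<le> K1"
    using assms(3) unfolding Dgamma_def by blast
  define cM where "cM = Max (insert 0 (degp ` M))"
  have cM: "\<And>\<mu>. \<mu> \<in> M \<Longrightarrow> degp \<mu> \<le> cM" unfolding cM_def using finM by auto
  obtain K2 where K2: "\<And>\<mu> x y. degp \<mu> \<le> cM \<Longrightarrow> \<bar>g y x \<mu>\<bar> \<le> K2 * pw (norm (y - x)) (degp \<mu>)"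
    using assms(2) unfolding is_model_def by blast
  obtain K3 where K3: "\<And>\<tau> t x. deg \<tau> \<le> \<gamma> \<Longrightarrow> 0 < t \<Longrightarrow> t \<le> 1 \<Longrightarrow>
      \<bar>Pix x \<tau> (heat t x)\<bar> \<le> K3 * t powr (deg \<tau> / 2)"
    using assms(2) unfolding is_model_def by blast
  define C where "C = \<bar>K1\<bar> * \<bar>K2\<bar> * \<bar>K3\<bar> * (\<Sum>\<sigma>\<in>S. \<Sum>\<rho>\<in>S. \<Sum>\<mu>\<in>M. \<bar>D \<sigma> \<rho> \<mu>\<bar>)"
  have C_nn: "0 \<le> C" unfolding C_def by (intro mult_nonneg_nonneg sum_nonneg) auto
  show ?thesis
  proof (intro exI allI impI)
    fix x y :: 'a and t :: real
    assume t: "0 < t" "t \<le> 1"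
    define \<phi> where "\<phi> = heat t x"
    define r where "r = norm (y - x)"
    define a where "a \<rho> = t powr (deg \<rho> / 2) * (r + sqrt t) powr (\<gamma> - deg \<rho>)" for \<rho>
    have a_nn: "\<And>\<rho>. 0 \<le> a \<rho>" unfolding a_def by auto
    have goal: "\<bar>piT (Pix y) (v y) \<phi> - piT (Pix x) (v x) \<phi>\<bar> \<le> C * (\<Sum>\<rho>\<in>S. a \<rho>)"
    proof (cases "x = y")
      case True
      then show ?thesis using C_nn a_nn by (simp add: sum_nonneg)
    next
      case False
      then have r_pos: "0 < r" unfolding r_def by auto
      define w where "w \<sigma> = v y \<sigma> - Gam D (g y x) (v x) \<sigma>" for \<sigma>
      have "piT (Pix x) (v x) \<phi> = (\<Sum>\<tau>\<in>S. v x \<tau> * (\<Sum>\<sigma>\<in>S. c (g y x) \<tau> \<sigma> * Pix y \<sigma> \<phi>))"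
        unfolding Lam by (rule sum.cong) (auto simp: Pexp[where x=x and y=y])
      also have "\<dots> = (\<Sum>\<sigma>\<in>S. (\<Sum>\<tau>\<in>S. v x \<tau> * c (g y x) \<tau> \<sigma>) * Pix y \<sigma> \<phi>)"
        unfolding sum_distrib_left sum_distrib_right mult.assoc by (rule sum.swap)
      also have "\<dots> = (\<Sum>\<sigma>\<in>S. Gam D (g y x) (v x) \<sigma> * Pix y \<sigma> \<phi>)" by (simp add: GamV)
      finally have ex: "piT (Pix x) (v x) \<phi> = (\<Sum>\<sigma>\<in>S. Gam D (g y x) (v x) \<sigma> * Pix y \<sigma> \<phi>)" .
      have eq1: "piT (Pix y) (v y) \<phi> - piT (Pix x) (v x) \<phi> = (\<Sum>\<sigma>\<in>S. w \<sigma> * Pix y \<sigma> \<phi>)"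
        unfolding ex w_def by (simp add: Lam sum_subtractf left_diff_distrib)
      have eq2: "\<And>\<sigma>. \<sigma> \<in> S \<Longrightarrow> w \<sigma> * Pix y \<sigma> \<phi> =
          (\<Sum>\<rho>\<in>S. \<Sum>\<mu>\<in>M. w \<sigma> * D \<sigma> \<rho> \<mu> * g x y \<mu> * Pix x \<rho> \<phi>)"
        by (simp add: Pexp[where x=y and y=x] c_sum sum_distrib_left sum_distrib_right mult.assoc)
      define K where "K = \<bar>K1\<bar> * \<bar>K2\<bar> * \<bar>K3\<bar>"
      have K_nn: "0 \<le> K" unfolding K_def by auto
      have tb: "\<bar>w \<sigma> * D \<sigma> \<rho> \<mu> * g x y \<mu> * Pix x \<rho> \<phi>\<bar> \<le> K * \<bar>D \<sigma> \<rho> \<mu>\<bar> * a \<rho>"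
        if sS: "\<sigma> \<in> S" and rS: "\<rho> \<in> S" and mM: "\<mu> \<in> M" for \<sigma> \<rho> \<mu>
      proof (cases "D \<sigma> \<rho> \<mu> = 0")
        case True then show ?thesis by simp
      next
        case False
        have dd: "deg \<rho> = deg \<sigma> - degp \<mu>" using Ddeg[OF False] .
        have b1: "\<bar>w \<sigma>\<bar> \<le> \<bar>K1\<bar> * r powr (\<gamma> - deg \<sigma>)"
        proof -
          have "\<bar>w \<sigma>\<bar> / r powr (\<gamma> - deg \<sigma>) \<le> K1"
            using K1[where \<tau>=\<sigma> and x=x and y=y] sS False \<open>x \<noteq> y\<close> unfolding w_def r_def S_def by force
          then have "\<bar>w \<sigma>\<bar> \<le> K1 * r powr (\<gamma> - deg \<sigma>)" using r_pos by (simp add: divide_le_eq)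
          also have "\<dots> \<le> \<bar>K1\<bar> * r powr (\<gamma> - deg \<sigma>)" by (intro mult_right_mono) auto
          finally show ?thesis .
        qed
        have b2: "\<bar>g x y \<mu>\<bar> \<le> \<bar>K2\<bar> * pw r (degp \<mu>)"
        proof -
          have "\<bar>g x y \<mu>\<bar> \<le> K2 * pw r (degp \<mu>)"
            using K2[where \<mu>=\<mu> and x=y and y=x] cM[OF mM] unfolding r_def by (simp add: norm_minus_commute)
          also have "\<dots> \<le> \<bar>K2\<bar> * pw r (degp \<mu>)" by (intro mult_right_mono) (auto simp: pw_def)
          finally show ?thesis .
        qed
        have b3: "\<bar>Pix x \<rho> \<phi>\<bar> \<le> \<bar>K3\<bar> * t powr (deg \<rho> / 2)"
        proof -
          have "\<bar>Pix x \<rho> \<phi>\<bar> \<le> K3 * t powr (deg \<rho> / 2)"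
            using K3[where \<tau>=\<rho> and t=t and x=x] rS t unfolding \<phi>_def S_def by simp
          also have "\<dots> \<le> \<bar>K3\<bar> * t powr (deg \<rho> / 2)" by (intro mult_right_mono) auto
          finally show ?thesis .
        qed
        have pwe: "r powr (\<gamma> - deg \<sigma>) * pw r (degp \<mu>) = r powr (\<gamma> - deg \<rho>)"
        proof -
          have e: "\<gamma> - deg \<rho> = (\<gamma> - deg \<sigma>) + degp \<mu>" using dd by simp
          show ?thesis unfolding e using r_pos by (simp add: pw_def powr_add)
        qed
        have mono: "r powr (\<gamma> - deg \<rho>) \<le> (r + sqrt t) powr (\<gamma> - deg \<rho>)"
          using rS r_pos t by (intro powr_mono2) (auto simp: S_def)
        have "\<bar>w \<sigma> * D \<sigma> \<rho> \<mu> * g x y \<mu> * Pix x \<rho> \<phi>\<bar>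
            = \<bar>D \<sigma> \<rho> \<mu>\<bar> * (\<bar>w \<sigma>\<bar> * \<bar>g x y \<mu>\<bar> * \<bar>Pix x \<rho> \<phi>\<bar>)" by (simp add: abs_mult)
        also have "\<dots> \<le> \<bar>D \<sigma> \<rho> \<mu>\<bar> * ((\<bar>K1\<bar> * r powr (\<gamma> - deg \<sigma>)) * (\<bar>K2\<bar> * pw r (degp \<mu>))
              * (\<bar>K3\<bar> * t powr (deg \<rho> / 2)))"
          by (intro mult_left_mono prod3_mono b1 b2 b3) auto
        also have "\<dots> = K * \<bar>D \<sigma> \<rho> \<mu>\<bar> * (t powr (deg \<rho> / 2) * (r powr (\<gamma> - deg \<sigma>) * pw r (degp \<mu>)))"
          unfolding K_def by (simp add: mult_ac)
        also have "\<dots> \<le> K * \<bar>D \<sigma> \<rho> \<mu>\<bar> * a \<rho>"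
          unfolding pwe a_def using K_nn mono
          by (intro mult_left_mono) (auto intro: mult_left_mono)
        finally show ?thesis .
      qed
      have "\<bar>piT (Pix y) (v y) \<phi> - piT (Pix x) (v x) \<phi>\<bar>
          = \<bar>\<Sum>\<sigma>\<in>S. \<Sum>\<rho>\<in>S. \<Sum>\<mu>\<in>M. w \<sigma> * D \<sigma> \<rho> \<mu> * g x y \<mu> * Pix x \<rho> \<phi>\<bar>"
        unfolding eq1 by (simp add: eq2)
      also have "\<dots> \<le> (\<Sum>\<sigma>\<in>S. \<Sum>\<rho>\<in>S. \<Sum>\<mu>\<in>M. \<bar>w \<sigma> * D \<sigma> \<rho> \<mu> * g x y \<mu> * Pix x \<rho> \<phi>\<bar>)"
        by (rule order_trans[OF sum_abs], intro sum_mono, rule order_trans[OF sum_abs],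
            intro sum_mono, rule sum_abs)
      also have "\<dots> \<le> (\<Sum>\<sigma>\<in>S. \<Sum>\<rho>\<in>S. \<Sum>\<mu>\<in>M. K * \<bar>D \<sigma> \<rho> \<mu>\<bar> * (\<Sum>\<rho>'\<in>S. a \<rho>'))"
      proof (intro sum_mono)
        fix \<sigma> \<rho> \<mu> assume "\<sigma> \<in> S" "\<rho> \<in> S" "\<mu> \<in> M"
        have "a \<rho> \<le> (\<Sum>\<rho>'\<in>S. a \<rho>')" using \<open>\<rho> \<in> S\<close> finS a_nn by (intro member_le_sum) auto
        then have "K * \<bar>D \<sigma> \<rho> \<mu>\<bar> * a \<rho> \<le> K * \<bar>D \<sigma> \<rho> \<mu>\<bar> * (\<Sum>\<rho>'\<in>S. a \<rho>')"
          using K_nn by (intro mult_left_mono) auto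
        then show "\<bar>w \<sigma> * D \<sigma> \<rho> \<mu> * g x y \<mu> * Pix x \<rho> \<phi>\<bar> \<le> K * \<bar>D \<sigma> \<rho> \<mu>\<bar> * (\<Sum>\<rho>'\<in>S. a \<rho>')"
          using tb[OF \<open>\<sigma> \<in> S\<close> \<open>\<rho> \<in> S\<close> \<open>\<mu> \<in> M\<close>] by linarith
      qed
      also have "\<dots> = C * (\<Sum>\<rho>\<in>S. a \<rho>)"
      proof -
        have "C * (\<Sum>\<rho>\<in>S. a \<rho>) = (\<Sum>\<sigma>\<in>S. \<Sum>\<rho>\<in>S. \<Sum>\<mu>\<in>M. \<bar>D \<sigma> \<rho> \<mu>\<bar>) * (K * (\<Sum>\<rho>\<in>S. a \<rho>))"
          unfolding C_def K_def by (simp only: mult_ac)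
        also have "\<dots> = (\<Sum>\<sigma>\<in>S. \<Sum>\<rho>\<in>S. \<Sum>\<mu>\<in>M. \<bar>D \<sigma> \<rho> \<mu>\<bar> * (K * (\<Sum>\<rho>\<in>S. a \<rho>)))"
          by (simp only: sum_distrib_right)
        also have "\<dots> = (\<Sum>\<sigma>\<in>S. \<Sum>\<rho>\<in>S. \<Sum>\<mu>\<in>M. K * \<bar>D \<sigma> \<rho> \<mu>\<bar> * (\<Sum>\<rho>'\<in>S. a \<rho>'))"
          by (simp only: mult_ac)
        finally show ?thesis by simp
      qed
      finally show ?thesis .
    qed
    then show "\<bar>piT (Pix y) (v y) (heat t x) - piT (Pix x) (v x) (heat t x)\<bar>
             \<le> C * (\<Sum>\<tau>\<in>{\<tau>. deg \<tau> < \<gamma>}. t powr (deg \<tau> / 2) * (norm (y - x) + sqrt t) powr (\<gamma> - deg \<tau>))"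
      unfolding \<phi>_def a_def r_def S_def .
  qed
qed

end
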